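(* Let $Z_1,Z_2,\ldots$ be i.i.d. standard normal random variables, $\bar Z(n)=\frac1n\sum_{j=1}^nZ_j$, $n_0$ a positive integer, and $\tilde N(x;n_0)=\inf\{n\ge n_0:\bar Z(n)<x\}$ (with $\inf\emptyset=\infty$). Then: (1) for any $x>0$, $\Pr\{\tilde N(x;n_0)<\infty\}=1$ and $\mathrm E[\tilde N(x;n_0)]<\infty$; (2) for any $x<0$, $0<\Pr\{\tilde N(x;n_0)<\infty\}<1$ and $\mathrm E[\tilde N(x;n_0)]=\infty$; (3) for $x=0$, $\Pr\{\tilde N(0;n_0)<\infty\}=1$ and $\mathrm E[\tilde N(0;n_0)]=\infty$. *)

theory Defs
  imports "HOL-Probability.Probability"
begin

definition Zbar :: "(nat \<Rightarrow> 'a \<Rightarrow> real) \<Rightarrow> nat \<Rightarrow> 'a \<Rightarrow> real" where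
  "Zbar Z n \<omega> = (\<Sum>j = 1..n. Z j \<omega>) / real n"

text \<open>First passage time inf {n >= n0. Zbar n < x}, with inf of the empty set = infinity;
  valued in ennreal so that its expectation is a nonnegative integral.\<close>
definition Ntilde :: "(nat \<Rightarrow> 'a \<Rightarrow> real) \<Rightarrow> real \<Rightarrow> nat \<Rightarrow> 'a \<Rightarrow> ennreal" where
  "Ntilde Z x n0 \<omega> =
     (if \<exists>n\<ge>n0. Zbar Z n \<omega> < x
      then ennreal (real (LEAST n. n \<ge> n0 \<and> Zbar Z n \<omega> < x))
      else \<infinity>)"

end

theory Submission imports Defs "HOL-Analysis.Harmonic_Numbers" begin

lemma ennreal_infI: "(\<And>K::nat. of_nat K \<le> (s::ennreal)) \<Longrightarrow> s = \<infinity>"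
  by (metis ennreal_Ex_less_of_nat infinity_ennreal_def linorder_not_le top.not_eq_extremum)

lemma Ntilde_fin: "{\<omega>\<in>S. Ntilde Z x n0 \<omega> < \<infinity>} = {\<omega>\<in>S. \<exists>n\<ge>n0. Zbar Z n \<omega> < x}"
  by (auto simp: Ntilde_def)

lemma Zbar_less: "n \<ge> 1 \<Longrightarrow> Zbar Z n \<omega> < x \<longleftrightarrow> (\<Sum>j=1..n. Z j \<omega>) < real n * x"
  by (simp add: Zbar_def pos_divide_less_eq mult.commute)

lemma Ntilde_le_sum:
  assumes "n0 \<ge> 1"
  shows "Ntilde Z x n0 \<omega> \<le> of_nat n0 + (\<Sum>n. indicator {n. n0 \<le> n \<and> x \<le> Zbar Z n \<omega>} n)"
proof (cases "\<exists>n\<ge>n0. Zbar Z n \<omega> < x")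
  case True
  define m where "m = (LEAST n. n \<ge> n0 \<and> Zbar Z n \<omega> < x)"
  have m: "m \<ge> n0" using LeastI_ex[OF True] by (simp add: m_def)
  have nm: "n0 \<le> n \<Longrightarrow> n < m \<Longrightarrow> x \<le> Zbar Z n \<omega>" for n
    using not_less_Least[of n "\<lambda>n. n \<ge> n0 \<and> Zbar Z n \<omega> < x"] by (auto simp: m_def)
  have "(of_nat (m - n0) :: ennreal) = (\<Sum>n\<in>{n0..<m}. indicator {n. n0 \<le> n \<and> x \<le> Zbar Z n \<omega>} n)"
    using nm by (simp add: indicator_def)
  also have "\<dots> \<le> (\<Sum>n. indicator {n. n0 \<le> n \<and> x \<le> Zbar Z n \<omega>} n)"
    by (intro sum_le_suminf) auto
  finally have "of_nat m \<le> of_nat n0 + (\<Sum>n. (indicator {n. n0 \<le> n \<and> x \<le> Zbar Z n \<omega>} n :: ennreal))"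
    using m by (metis add_left_mono le_add_diff_inverse of_nat_add)
  then show ?thesis using True by (simp add: Ntilde_def m_def ennreal_of_nat_eq_real_of_nat)
next
  case False
  have "(\<Sum>n. indicator {n. n0 \<le> n \<and> x \<le> Zbar Z n \<omega>} n) = (\<infinity>::ennreal)"
  proof (rule ennreal_infI)
    fix K
    have "(of_nat K :: ennreal) = (\<Sum>n\<in>{n0..<n0+K}. indicator {n. n0 \<le> n \<and> x \<le> Zbar Z n \<omega>} n)"
      using False by (simp add: indicator_def not_less)
    also have "\<dots> \<le> (\<Sum>n. indicator {n. n0 \<le> n \<and> x \<le> Zbar Z n \<omega>} n)"
      by (intro sum_le_suminf) auto
    finally show "of_nat K \<le> (\<Sum>n. (indicator {n. n0 \<le> n \<and> x \<le> Zbar Z n \<omega>} n :: ennreal))" .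
  qed
  then show ?thesis by simp
qed
lemma io_shift_aux:
  fixes a b :: "nat \<Rightarrow> real"
  assumes lim: "(\<lambda>k. a k - b k) \<longlonglongrightarrow> 0"
    and H: "\<forall>i m. \<exists>k\<ge>m. a k < -1 + 1 / real (Suc i)"
  shows "\<forall>i m. \<exists>k\<ge>m. b k < -1 + 1 / real (Suc i)"
proof (intro allI)
  fix i m
  define e where "e = 1 / real (Suc (2*i+1))"
  have e: "e > 0" by (simp add: e_def)
  have e2: "2 * e = 1 / real (Suc i)" by (simp add: e_def field_simps)
  obtain m0 where m0: "\<And>k. k \<ge> m0 \<Longrightarrow> \<bar>a k - b k\<bar> < e"
    using LIMSEQ_D[OF lim e] by auto
  obtain k where k: "k \<ge> max m m0" "a k < -1 + 1 / real (Suc (2*i+1))"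
    using H by blast
  have "\<bar>a k - b k\<bar> < e" using m0 k by auto
  then have "b k < -1 + 2 * e" using k by (simp add: e_def)
  then show "\<exists>k\<ge>m. b k < -1 + 1 / real (Suc i)" using k e2 by (intro exI[of _ k]) auto
qed

lemma io_shift:
  fixes a b :: "nat \<Rightarrow> real"
  assumes lim: "(\<lambda>k. a k - b k) \<longlonglongrightarrow> 0"
  shows "(\<forall>i m. \<exists>k\<ge>m. a k < -1 + 1 / real (Suc i)) \<longleftrightarrow> (\<forall>i m. \<exists>k\<ge>m. b k < -1 + 1 / real (Suc i))"
proof
  show "\<forall>i m. \<exists>k\<ge>m. a k < -1 + 1 / real (Suc i) \<Longrightarrow> \<forall>i m. \<exists>k\<ge>m. b k < -1 + 1 / real (Suc i)"
    using io_shift_aux[OF lim] by blast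
  have "(\<lambda>k. b k - a k) \<longlonglongrightarrow> 0" using tendsto_minus[OF lim] by simp
  then show "\<forall>i m. \<exists>k\<ge>m. b k < -1 + 1 / real (Suc i) \<Longrightarrow> \<forall>i m. \<exists>k\<ge>m. a k < -1 + 1 / real (Suc i)"
    using io_shift_aux by blast
qed

locale lem4 = prob_space M for M :: "'a measure" +
  fixes Z :: "nat \<Rightarrow> 'a \<Rightarrow> real"
  assumes indZ: "indep_vars (\<lambda>_. borel) Z {1..}"
  and distZ: "\<And>j. j \<ge> 1 \<Longrightarrow> distributed M lborel (Z j) std_normal_density"
begin
lemma Z_meas: "j \<ge> 1 \<Longrightarrow> Z j \<in> borel_measurable M"
  using distZ distributed_measurable by (metis measurable_lborel1)

lemma sum_meas: "I \<subseteq> {1..} \<Longrightarrow> (\<lambda>\<omega>. \<Sum>j\<in>I. Z j \<omega>) \<in> borel_measurable M"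
  by (intro borel_measurable_sum Z_meas) auto

lemma sum_meas_gt[measurable]: "(\<lambda>\<omega>. \<Sum>j\<in>{a<..b}. Z j \<omega>) \<in> borel_measurable M"
  by (rule sum_meas) auto

lemma sum_meas_1[measurable]: "(\<lambda>\<omega>. \<Sum>j\<in>{1..b}. Z j \<omega>) \<in> borel_measurable M"
  by (rule sum_meas) auto

lemma sum_dist:
  assumes I: "finite I" "I \<noteq> {}" "I \<subseteq> {1..}"
  shows "distributed M lborel (\<lambda>\<omega>. \<Sum>j\<in>I. Z j \<omega>) (normal_density 0 (sqrt (real (card I))))"
proof -
  have "distributed M lborel (\<lambda>\<omega>. \<Sum>j\<in>I. Z j \<omega>) (normal_density (\<Sum>j\<in>I. 0) (sqrt (\<Sum>j\<in>I. 1\<^sup>2)))"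
    using I by (intro sum_indep_normal indep_vars_subset[OF indZ] distZ) auto
  then show ?thesis by simp
qed

lemma sum_std:
  assumes I: "finite I" "I \<noteq> {}" "I \<subseteq> {1..}"
  shows "distributed M lborel (\<lambda>\<omega>. (\<Sum>j\<in>I. Z j \<omega>) / sqrt (real (card I))) std_normal_density"
proof -
  have c: "0 < sqrt (real (card I))" using I by (simp add: card_gt_0_iff)
  show ?thesis using normal_standard_normal_convert[OF c, of "\<lambda>\<omega>. \<Sum>j\<in>I. Z j \<omega>" 0] sum_dist[OF I]
    by simp
qed

lemma std_fourth:
  assumes X: "distributed M lborel X std_normal_density" and t: "t > 0"
  shows "prob {\<omega>\<in>space M. t \<le> \<bar>X \<omega>\<bar>} \<le> 3 / t^4"
proof -
  have Xm[measurable]: "X \<in> borel_measurable M" using X distributed_measurable by (metis measurable_lborel1)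
  have int: "integrable M (\<lambda>\<omega>. X \<omega> ^ 4)"
    using distributed_integrable[OF X, of "\<lambda>x. x^4"] integrable_std_normal_moment[of 4] by simp
  have e: "(\<integral>\<omega>. X \<omega> ^ 4 \<partial>M) = 3"
  proof -
    have "(\<integral>\<omega>. X \<omega> ^ 4 \<partial>M) = (\<integral>x. std_normal_density x * x ^ (2*2) \<partial>lborel)"
      using distributed_integral[OF X, of "\<lambda>x. x^4"] by simp
    also have "\<dots> = 3" by (subst integral_std_normal_moment_even) (simp add: fact_numeral)
    finally show ?thesis .
  qed
  have "{\<omega>\<in>space M. t \<le> \<bar>X \<omega>\<bar>} = {\<omega>\<in>space M. t^4 \<le> X \<omega> ^ 4}"
  proof -
    have "t \<le> \<bar>y\<bar> \<longleftrightarrow> t^4 \<le> y^4" for y :: real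
    proof -
      have "t^4 \<le> y^4 \<longleftrightarrow> t^4 \<le> \<bar>y\<bar>^4" by (simp add: power_even_abs_numeral)
      also have "\<dots> \<longleftrightarrow> t \<le> \<bar>y\<bar>" using t by (intro power_mono_iff) auto
      finally show ?thesis by simp
    qed
    then show ?thesis by auto
  qed
  also have "prob \<dots> \<le> (\<integral>\<omega>. X \<omega> ^ 4 \<partial>M) / t^4"
    using t int by (intro integral_Markov_inequality_measure[where A="space M"]) auto
  finally show ?thesis using e by simp
qed

lemma sum_tail:
  assumes I: "finite I" "I \<noteq> {}" "I \<subseteq> {1..}" and t: "t > 0"
  shows "prob {\<omega>\<in>space M. t \<le> \<bar>\<Sum>j\<in>I. Z j \<omega>\<bar>} \<le> 3 * real (card I) ^ 2 / t^4"
proof -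
  define c where "c = sqrt (real (card I))"
  have c: "c > 0" using I by (simp add: c_def card_gt_0_iff)
  have "{\<omega>\<in>space M. t \<le> \<bar>\<Sum>j\<in>I. Z j \<omega>\<bar>} = {\<omega>\<in>space M. t / c \<le> \<bar>(\<Sum>j\<in>I. Z j \<omega>) / c\<bar>}"
    using c by (auto simp: divide_le_cancel abs_div)
  also have "prob \<dots> \<le> 3 / (t/c)^4"
    using sum_std[OF I] c t by (intro std_fourth) (auto simp: c_def)
  also have "3 / (t/c)^4 = 3 * (c^2)^2 / t^4" using c by (simp add: field_simps power_mult_distrib)
  also have "c^2 = real (card I)" by (simp add: c_def)
  finally show ?thesis by simp
qed

lemma std_prob_eq:
  assumes X: "distributed M lborel X std_normal_density" and Y: "distributed M lborel Y std_normal_density"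
  shows "prob {\<omega>\<in>space M. X \<omega> < c} = prob {\<omega>\<in>space M. Y \<omega> < c}"
proof -
  have "emeasure M (X -` {..<c} \<inter> space M) = emeasure M (Y -` {..<c} \<inter> space M)"
    using distributed_emeasure[OF X, of "{..<c}"] distributed_emeasure[OF Y, of "{..<c}"] by simp
  moreover have "X -` {..<c} \<inter> space M = {\<omega>\<in>space M. X \<omega> < c}" "Y -` {..<c} \<inter> space M = {\<omega>\<in>space M. Y \<omega> < c}" by auto
  ultimately show ?thesis by (simp add: measure_def)
qed

lemma std_prob_pos:
  assumes X: "distributed M lborel X std_normal_density"
  shows "prob {\<omega>\<in>space M. X \<omega> < c} > 0"
proof -
  have e: "emeasure M (X -` {..<c} \<inter> space M) = (\<integral>\<^sup>+x. ennreal (std_normal_density x) * indicator {..<c} x \<partial>lborel)"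
    using distributed_emeasure[OF X, of "{..<c}"] by simp
  have "(\<integral>\<^sup>+x. ennreal (std_normal_density x) * indicator {..<c} x \<partial>lborel) \<noteq> 0"
  proof
    assume "(\<integral>\<^sup>+x. ennreal (std_normal_density x) * indicator {..<c} x \<partial>lborel) = 0"
    then have "AE x in lborel. ennreal (std_normal_density x) * indicator {..<c} x = 0"
      by (subst (asm) nn_integral_0_iff_AE) auto
    moreover have pos: "\<And>x. std_normal_density x \<noteq> 0" using normal_density_pos[of 1 0] by (metis less_irrefl zero_less_one)
    ultimately have "AE x in lborel. x \<notin> {c - 1..c - 1/2}"
      by (elim AE_mp, intro AE_I2 impI) (auto simp: indicator_def split: if_splits)
    then have "{c - 1..c - 1/2} \<in> null_sets lborel"
      by (subst AE_iff_null_sets) auto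
    then show False by (auto simp: null_sets_def)
  qed
  then have "emeasure M {\<omega>\<in>space M. X \<omega> < c} \<noteq> 0"
    using e by (simp add: vimage_def Int_def conj_commute)
  then show ?thesis
    by (simp add: emeasure_eq_measure zero_less_measure_iff)
qed

lemma Zbar_ge_prob:
  assumes n: "n \<ge> 1" and x: "x > 0"
  shows "prob {\<omega>\<in>space M. x \<le> Zbar Z n \<omega>} \<le> 3 / x^4 * inverse (real n ^ 2)"
proof -
  have "{\<omega>\<in>space M. x \<le> Zbar Z n \<omega>} \<subseteq> {\<omega>\<in>space M. real n * x \<le> \<bar>\<Sum>j\<in>{1..n}. Z j \<omega>\<bar>}"
  proof safe
    fix \<omega> assume "\<omega> \<in> space M" "x \<le> Zbar Z n \<omega>"
    then have "\<not> (\<Sum>j=1..n. Z j \<omega>) < real n * x" using Zbar_less[OF n, of Z \<omega> x] by simp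
    then show "real n * x \<le> \<bar>\<Sum>j\<in>{1..n}. Z j \<omega>\<bar>" by linarith
  qed
  then have "prob {\<omega>\<in>space M. x \<le> Zbar Z n \<omega>} \<le> prob {\<omega>\<in>space M. real n * x \<le> \<bar>\<Sum>j\<in>{1..n}. Z j \<omega>\<bar>}"
    using sum_meas[of "{1..n}"] by (intro finite_measure_mono) auto
  also have "\<dots> \<le> 3 * real (card {1..n}) ^ 2 / (real n * x)^4"
    using n x by (intro sum_tail) auto
  also have "\<dots> = 3 / x^4 * inverse (real n ^ 2)"
    using n x by (simp add: field_simps power_mult_distrib)
  finally show ?thesis .
qed

lemma Zbar_meas: "n \<ge> 1 \<Longrightarrow> Zbar Z n \<in> borel_measurable M"
  unfolding Zbar_def[abs_def] using sum_meas[of "{1..n}"] by (intro borel_measurable_divide) auto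

lemma F_meas: "n0 \<ge> 1 \<Longrightarrow> {\<omega>\<in>space M. \<exists>n\<ge>n0. Zbar Z n \<omega> < x} \<in> sets M"
proof -
  assume n0: "n0 \<ge> 1"
  have "{\<omega>\<in>space M. \<exists>n\<ge>n0. Zbar Z n \<omega> < x} = (\<Union>n\<in>{n0..}. {\<omega>\<in>space M. Zbar Z n \<omega> < x})" by auto
  also have "\<dots> \<in> sets M" using Zbar_meas n0 by (intro sets.countable_UN') auto
  finally show ?thesis .
qed

lemma part1:
  assumes x: "x > 0" and n0: "n0 \<ge> 1"
  shows "prob {\<omega> \<in> space M. Ntilde Z x n0 \<omega> < \<infinity>} = 1 \<and> (\<integral>\<^sup>+ \<omega>. Ntilde Z x n0 \<omega> \<partial>M) < \<infinity>"
proof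
  define B where "B n = {\<omega>\<in>space M. n0 \<le> n \<and> x \<le> Zbar Z n \<omega>}" for n
  define f where "f n = 3 / x^4 * inverse (real n ^ 2)" for n
  have Zbar_meas: "n \<ge> 1 \<Longrightarrow> Zbar Z n \<in> borel_measurable M" for n
    unfolding Zbar_def[abs_def] using sum_meas[of "{1..n}"] by (intro borel_measurable_divide) auto
  have Bm: "B n \<in> sets M" for n
  proof (cases "n0 \<le> n")
    case True then show ?thesis using Zbar_meas[of n] n0 by (simp add: B_def)
  next
    case False then show ?thesis by (simp add: B_def)
  qed
  have PB: "prob (B n) \<le> f n" for n
  proof (cases "n0 \<le> n")
    case True
    then have "B n = {\<omega>\<in>space M. x \<le> Zbar Z n \<omega>}" by (auto simp: B_def)
    then show ?thesis using Zbar_ge_prob[of n x] True n0 x by (simp add: f_def)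
  next
    case False then show ?thesis by (simp add: B_def f_def x)
  qed
  have f0: "f n \<ge> 0" for n using x by (simp add: f_def)
  have fs: "summable f"
    unfolding f_def by (intro summable_mult inverse_power_summable) simp
  have "(\<integral>\<^sup>+ \<omega>. Ntilde Z x n0 \<omega> \<partial>M) \<le> (\<integral>\<^sup>+ \<omega>. of_nat n0 + (\<Sum>n. indicator (B n) \<omega>) \<partial>M)"
  proof (intro nn_integral_mono)
    fix \<omega> assume "\<omega> \<in> space M"
    then have "indicator (B n) \<omega> = (indicator {n. n0 \<le> n \<and> x \<le> Zbar Z n \<omega>} n :: ennreal)" for n
      by (simp add: B_def indicator_def)
    then show "Ntilde Z x n0 \<omega> \<le> of_nat n0 + (\<Sum>n. indicator (B n) \<omega>)"
      using Ntilde_le_sum[OF n0, where Z=Z and x=x and \<omega>=\<omega>] by simp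
  qed
  also have "\<dots> = of_nat n0 + (\<Sum>n. emeasure M (B n))"
    using Bm by (simp add: nn_integral_add nn_integral_suminf emeasure_space_1)
  finally have I1: "(\<integral>\<^sup>+ \<omega>. Ntilde Z x n0 \<omega> \<partial>M) \<le> of_nat n0 + (\<Sum>n. emeasure M (B n))" .
  have "(\<Sum>n. emeasure M (B n)) \<le> (\<Sum>n. ennreal (f n))"
    using PB Bm by (intro suminf_le) (auto simp: emeasure_eq_measure intro: ennreal_leI)
  also have "(\<Sum>n. ennreal (f n)) < \<infinity>"
    using ennreal_suminf_neq_top[OF fs f0] by (simp add: top.not_eq_extremum)
  finally have "of_nat n0 + (\<Sum>n. emeasure M (B n)) < \<infinity>"
    by (simp add: ennreal_add_less_top of_nat_less_top)
  with I1 show "(\<integral>\<^sup>+ \<omega>. Ntilde Z x n0 \<omega> \<partial>M) < \<infinity>" by (rule le_less_trans)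
  let ?F = "{\<omega>\<in>space M. \<exists>n\<ge>n0. Zbar Z n \<omega> < x}"
  have Fm: "?F \<in> sets M"
  proof -
    have "?F = (\<Union>n\<in>{n0..}. {\<omega>\<in>space M. Zbar Z n \<omega> < x})" by auto
    also have "\<dots> \<in> sets M" using Zbar_meas n0 by (intro sets.countable_UN') auto
    finally show ?thesis .
  qed
  have "prob (space M - ?F) \<le> f n" if "n \<ge> n0" for n
  proof -
    have "space M - ?F \<subseteq> B n" using that by (auto simp: B_def not_less)
    then have "prob (space M - ?F) \<le> prob (B n)" using Bm by (intro finite_measure_mono) auto
    then show ?thesis using PB[of n] by simp
  qed
  moreover have "f \<longlonglongrightarrow> 0" using fs by (rule summable_LIMSEQ_zero)
  ultimately have "prob (space M - ?F) \<le> 0"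
    by (intro LIMSEQ_le_const[OF \<open>f \<longlonglongrightarrow> 0\<close>]) (auto intro: exI[of _ n0])
  then have "prob (space M - ?F) = 0" using measure_nonneg[of M "space M - ?F"] by linarith
  then have "prob ?F = 1" using prob_compl[OF Fm] by (simp add: Diff_eq Int_commute)
  then show "prob {\<omega> \<in> space M. Ntilde Z x n0 \<omega> < \<infinity>} = 1" by (subst Ntilde_fin)
qed

lemma negZ_dist: "j \<ge> 1 \<Longrightarrow> distributed M lborel (\<lambda>\<omega>. - Z j \<omega>) std_normal_density"
  using normal_density_affine[of "Z j" 0 1 "-1" 0] distZ[of j] by simp

lemma part2:
  assumes x: "x < 0" and n0: "n0 \<ge> 1"
  shows "0 < prob {\<omega> \<in> space M. Ntilde Z x n0 \<omega> < \<infinity>}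
         \<and> prob {\<omega> \<in> space M. Ntilde Z x n0 \<omega> < \<infinity>} < 1
         \<and> (\<integral>\<^sup>+ \<omega>. Ntilde Z x n0 \<omega> \<partial>M) = \<infinity>"
proof -
  define F where "F = {\<omega>\<in>space M. \<exists>n\<ge>n0. Zbar Z n \<omega> < x}"
  have Fm: "F \<in> sets M" unfolding F_def using F_meas[OF n0] .
  have FN: "{\<omega> \<in> space M. Ntilde Z x n0 \<omega> < \<infinity>} = F" unfolding F_def by (rule Ntilde_fin)
  have pos: "0 < prob F"
  proof -
    let ?X = "\<lambda>\<omega>. (\<Sum>j\<in>{1..n0}. Z j \<omega>) / sqrt (real (card {1..n0}))"
    have "0 < prob {\<omega>\<in>space M. ?X \<omega> < sqrt (real n0) * x}"
      using n0 by (intro std_prob_pos sum_std) auto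
    also have "\<dots> \<le> prob F"
    proof (rule finite_measure_mono[OF _ Fm], safe)
      fix \<omega> assume w: "\<omega> \<in> space M" "?X \<omega> < sqrt (real n0) * x"
      have sp: "sqrt (real n0) > 0" using n0 by simp
      from w have "(\<Sum>j\<in>{1..n0}. Z j \<omega>) < sqrt (real n0) * x * sqrt (real n0)"
        using sp by (simp add: pos_divide_less_eq)
      also have "\<dots> = real n0 * x" by (simp add: mult.commute mult.left_commute)
      finally have "Zbar Z n0 \<omega> < x" using Zbar_less[OF n0, where Z=Z and \<omega>=\<omega> and x=x] by simp
      then show "\<omega> \<in> F" using w by (auto simp: F_def)
    qed
    finally show ?thesis .
  qed
  define g where "g n = 3 / x^4 * inverse (real n ^ 2)" for n
  have gs: "summable g" unfolding g_def by (intro summable_mult inverse_power_summable) simp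
  have g0: "g n \<ge> 0" for n by (simp add: g_def)
  obtain N where N: "\<forall>n\<ge>N. norm (\<Sum>i. g (i + n)) < 1"
    using suminf_exist_split[OF _ gs, of 1] by auto
  define m where "m = max N n0"
  have m1: "m \<ge> 1" "m \<ge> n0" using n0 by (auto simp: m_def)
  have gm: "(\<Sum>i. g (i + (m+1))) < 1"
  proof -
    have "m + 1 \<ge> N" by (simp add: m_def)
    then have "\<bar>\<Sum>i. g (i + (m+1))\<bar> < 1" using N by auto
    then show ?thesis by linarith
  qed
  define C where "C i = {\<omega>\<in>space M. (\<Sum>j\<in>{m<..i+m+1}. Z j \<omega>) < real (i+m+1) * x}" for i
  have Cm: "C i \<in> sets M" for i
    unfolding C_def using sum_meas[of "{m<..i+m+1}"] by measurable auto
  have PC: "prob (C i) \<le> g (i + (m+1))" for i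
  proof -
    let ?n = "i+m+1"
    have "C i \<subseteq> {\<omega>\<in>space M. real ?n * (- x) \<le> \<bar>\<Sum>j\<in>{m<..?n}. Z j \<omega>\<bar>}"
      unfolding C_def using x by auto
    then have "prob (C i) \<le> prob {\<omega>\<in>space M. real ?n * (- x) \<le> \<bar>\<Sum>j\<in>{m<..?n}. Z j \<omega>\<bar>}"
      by (intro finite_measure_mono) measurable
    also have "\<dots> \<le> 3 * real (card {m<..?n}) ^ 2 / (real ?n * (- x))^4"
      using x by (intro sum_tail) (auto simp: mult_pos_neg)
    also have "\<dots> \<le> 3 * real ?n ^ 2 / (real ?n * (- x))^4"
      using x by (intro divide_right_mono mult_left_mono power_mono) auto
    also have "\<dots> = g (i + (m+1))"
    proof -
      have e: "(real ?n * (- x))^4 = real ?n ^ 2 * real ?n ^ 2 * x^4" by (simp add: power_mult_distrib)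
      have "real ?n > 0" "x^4 > 0" using x by auto
      then show ?thesis unfolding e g_def by (simp add: field_simps)
    qed
    finally show ?thesis .
  qed
  define B where "B = space M - (\<Union>i. C i)"
  have Bm: "B \<in> sets M" unfolding B_def using Cm by auto
  have "emeasure M (\<Union>i. C i) \<le> (\<Sum>i. emeasure M (C i))"
    using Cm by (intro emeasure_subadditive_countably) auto
  also have "\<dots> \<le> (\<Sum>i. ennreal (g (i + (m+1))))"
    using PC Cm by (intro suminf_le) (auto simp: emeasure_eq_measure intro: ennreal_leI)
  also have "\<dots> = ennreal (\<Sum>i. g (i + (m+1)))"
    using g0 summable_ignore_initial_segment[OF gs, of "m+1"] by (intro suminf_ennreal2) auto
  also have "\<dots> < 1" using gm by simp
  finally have "prob (\<Union>i. C i) < 1"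
    by (simp add: emeasure_eq_measure)
  then have PB: "0 < prob B"
    unfolding B_def using prob_compl[of "\<Union>i. C i"] Cm by (auto simp: Diff_eq Int_commute)
  define A where "A = {\<omega>\<in>space M. \<forall>j\<in>{1..m}. 0 < Z j \<omega>}"
  have PA: "0 < prob A"
  proof -
    have "A = (\<Inter>j\<in>{1..m}. Z j -` {0<..} \<inter> space M)" using m1 by (auto simp: A_def)
    moreover have "prob (\<Inter>j\<in>{1..m}. Z j -` {0<..} \<inter> space M) = (\<Prod>j\<in>{1..m}. prob (Z j -` {0<..} \<inter> space M))"
      using m1 by (intro indep_varsD[OF indZ]) auto
    ultimately have "prob A = (\<Prod>j\<in>{1..m}. prob (Z j -` {0<..} \<inter> space M))" by simp
    also have "\<dots> > 0"
    proof (intro prod_pos)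
      fix j assume j: "j \<in> {1..m}"
      have "0 < prob {\<omega>\<in>space M. - Z j \<omega> < 0}" using j by (intro std_prob_pos negZ_dist) auto
      also have "{\<omega>\<in>space M. - Z j \<omega> < 0} = Z j -` {0<..} \<inter> space M" by auto
      finally show "0 < prob (Z j -` {0<..} \<inter> space M)" .
    qed
    finally show ?thesis .
  qed
  have AB: "prob (A \<inter> B) = prob A * prob B"
  proof -
    have ind: "indep_var (PiM {1..m} (\<lambda>_. borel)) (\<lambda>\<omega>. restrict (\<lambda>i. Z i \<omega>) {1..m})
                        (PiM {m<..} (\<lambda>_. borel)) (\<lambda>\<omega>. restrict (\<lambda>i. Z i \<omega>) {m<..})"
      by (rule indep_var_restrict[OF indZ]) auto
    define Xa where "Xa = {f\<in>space (PiM {1..m} (\<lambda>_. borel)). \<forall>j\<in>{1..m}. 0 < (f j :: real)}"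
    define Xb where "Xb = {f\<in>space (PiM {m<..} (\<lambda>_. borel)). \<forall>i. \<not> (\<Sum>j\<in>{m<..i+m+1}. f j :: real) < real (i+m+1) * x}"
    have Xa: "Xa \<in> sets (PiM {1..m} (\<lambda>_. borel))" unfolding Xa_def by measurable
    have [measurable]: "\<And>n. (\<lambda>f. \<Sum>j\<in>{m<..n}. f j :: real) \<in> borel_measurable (PiM {m<..} (\<lambda>_. borel))"
      by (intro borel_measurable_sum measurable_component_singleton) auto
    have Xb: "Xb \<in> sets (PiM {m<..} (\<lambda>_. borel))" unfolding Xb_def by measurable
    have eA: "(\<lambda>\<omega>. restrict (\<lambda>i. Z i \<omega>) {1..m}) -` Xa \<inter> space M = A"
      by (auto simp: Xa_def A_def space_PiM PiE_iff)
    have eB: "(\<lambda>\<omega>. restrict (\<lambda>i. Z i \<omega>) {m<..}) -` Xb \<inter> space M = B"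
      by (auto simp: Xb_def B_def C_def space_PiM PiE_iff)
    have eAB: "(\<lambda>\<omega>. (restrict (\<lambda>i. Z i \<omega>) {1..m}, restrict (\<lambda>i. Z i \<omega>) {m<..})) -` (Xa \<times> Xb) \<inter> space M = A \<inter> B"
      using eA eB by auto
    show ?thesis using indep_varD[OF ind Xa Xb] eA eB eAB by simp
  qed
  have ABF: "A \<inter> B \<subseteq> space M - F"
  proof safe
    fix \<omega> assume wA: "\<omega> \<in> A" and wB: "\<omega> \<in> B"
    then have w: "\<omega> \<in> space M" by (auto simp: A_def)
    assume "\<omega> \<in> F"
    then obtain n where n: "n \<ge> n0" "Zbar Z n \<omega> < x" by (auto simp: F_def)
    have n1: "n \<ge> 1" using n n0 by simp
    have Sn: "(\<Sum>j=1..n. Z j \<omega>) < real n * x" using n Zbar_less[OF n1, where Z=Z and \<omega>=\<omega> and x=x] by simp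
    show False
    proof (cases "n \<le> m")
      case True
      have "0 < (\<Sum>j=1..n. Z j \<omega>)"
        using wA True n1 by (intro sum_pos) (auto simp: A_def)
      moreover have "real n * x < 0" using n1 x by (simp add: mult_pos_neg)
      ultimately show False using Sn by linarith
    next
      case False
      define i where "i = n - m - 1"
      have ni: "n = i + m + 1" using False by (simp add: i_def)
      have "\<omega> \<notin> C i" using wB by (auto simp: B_def)
      then have R: "real n * x \<le> (\<Sum>j\<in>{m<..n}. Z j \<omega>)" using w ni by (auto simp: C_def not_less)
      have split: "{1..n} = {1..m} \<union> {m<..n}" using False by auto
      have "(\<Sum>j=1..n. Z j \<omega>) = (\<Sum>j=1..m. Z j \<omega>) + (\<Sum>j\<in>{m<..n}. Z j \<omega>)"
        unfolding split by (rule sum.union_disjoint) auto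
      moreover have "0 \<le> (\<Sum>j=1..m. Z j \<omega>)"
        using wA by (intro sum_nonneg) (auto simp: A_def less_imp_le)
      ultimately show False using Sn R by linarith
    qed
  next
    fix \<omega> assume "\<omega> \<in> A" "\<omega> \<in> B"
    then show "\<omega> \<in> space M" by (auto simp: A_def)
  qed
  have "0 < prob (A \<inter> B)" using AB PA PB by simp
  also have "\<dots> \<le> prob (space M - F)" using ABF Fm by (intro finite_measure_mono) auto
  finally have PnF: "0 < prob (space M - F)" .
  then have lt1: "prob F < 1" using prob_compl[OF Fm] by (simp add: Diff_eq Int_commute)
  have "(\<integral>\<^sup>+ \<omega>. \<infinity> * indicator (space M - F) \<omega> \<partial>M) \<le> (\<integral>\<^sup>+ \<omega>. Ntilde Z x n0 \<omega> \<partial>M)"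
    by (intro nn_integral_mono) (auto simp: indicator_def F_def Ntilde_def)
  moreover have "(\<integral>\<^sup>+ \<omega>. \<infinity> * indicator (space M - F) \<omega> \<partial>M) = \<infinity>"
  proof -
    have "(\<integral>\<^sup>+ \<omega>. \<infinity> * indicator (space M - F) \<omega> \<partial>M) = \<infinity> * emeasure M (space M - F)"
      using Fm by (intro nn_integral_cmult_indicator) auto
    also have "\<dots> = \<infinity>" using PnF by (simp add: emeasure_eq_measure ennreal_top_mult)
    finally show ?thesis .
  qed
  ultimately have "(\<integral>\<^sup>+ \<omega>. Ntilde Z x n0 \<omega> \<partial>M) = \<infinity>" by (simp add: top_unique)
  then show ?thesis using pos lt1 FN by simp
qed

lemma Z_int: "j \<ge> 1 \<Longrightarrow> integrable M (Z j)"
  using distributed_integrable_var[OF distZ[of j]] integrable_std_normal_moment[of 1] by simp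

lemma Z_exp: "j \<ge> 1 \<Longrightarrow> expectation (Z j) = 0"
  using standard_normal_distributed_expectation[OF distZ[of j]] .

lemma S_int: "integrable M (\<lambda>\<omega>. \<Sum>j=1..n. Z j \<omega>)"
  by (intro Bochner_Integration.integrable_sum Z_int) auto

lemma S_sq:
  assumes n: "n \<ge> 1"
  shows "integrable M (\<lambda>\<omega>. (\<Sum>j=1..n. Z j \<omega>)^2)" "(\<integral>\<omega>. (\<Sum>j=1..n. Z j \<omega>)^2 \<partial>M) = real n"
proof -
  have D: "distributed M lborel (\<lambda>\<omega>. \<Sum>j=1..n. Z j \<omega>) (normal_density 0 (sqrt (real n)))"
    using sum_dist[of "{1..n}"] n by simp
  have sp: "0 < sqrt (real n)" using n by simp
  show "integrable M (\<lambda>\<omega>. (\<Sum>j=1..n. Z j \<omega>)^2)"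
    using distributed_integrable[OF D, of "\<lambda>x. x^2"] integrable_normal_moment[OF sp, of 0 2] by simp
  have "(\<integral>\<omega>. (\<Sum>j=1..n. Z j \<omega>)^2 \<partial>M) = (\<integral>x. normal_density 0 (sqrt (real n)) x * (x - 0)^(2*1) \<partial>lborel)"
    using distributed_integral[OF D, of "\<lambda>x. x^2"] by simp
  also have "\<dots> = real n"
    using integral_normal_moment_even[OF sp, of 0 1] by simp
  finally show "(\<integral>\<omega>. (\<Sum>j=1..n. Z j \<omega>)^2 \<partial>M) = real n" .
qed

definition "Aset n = {\<omega>\<in>space M. \<forall>k\<in>{1..n}. 0 \<le> (\<Sum>j=1..k. Z j \<omega>)}"

lemma Aset_meas[measurable]: "Aset n \<in> sets M"
  unfolding Aset_def by measurable

definition "Y n \<omega> = (\<Sum>j=1..n. Z j \<omega>) * indicator (Aset n) \<omega>"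

lemma Y_int: "integrable M (Y n)"
  unfolding Y_def by (intro integrable_real_mult_indicator S_int Aset_meas)

lemma indep_step: "(\<integral>\<omega>. Z (Suc n) \<omega> * indicator (Aset n) \<omega> \<partial>M) = 0"
proof -
  have ind: "indep_var (PiM {Suc n} (\<lambda>_. borel)) (\<lambda>\<omega>. restrict (\<lambda>i. Z i \<omega>) {Suc n})
                      (PiM {1..n} (\<lambda>_. borel)) (\<lambda>\<omega>. restrict (\<lambda>i. Z i \<omega>) {1..n})"
    by (rule indep_var_restrict[OF indZ]) auto
  define Xa where "Xa = {f\<in>space (PiM {1..n} (\<lambda>_. borel)). \<forall>k. 0 \<le> (\<Sum>j\<in>{1..min k n}. f j :: real)}"
  have [measurable]: "\<And>k. (\<lambda>f. \<Sum>j\<in>{1..min k n}. f j :: real) \<in> borel_measurable (PiM {1..n} (\<lambda>_. borel))"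
    by (intro borel_measurable_sum measurable_component_singleton) auto
  have Xa: "Xa \<in> sets (PiM {1..n} (\<lambda>_. borel))" unfolding Xa_def by measurable
  have minI: "(\<forall>k\<in>{1..n}. 0 \<le> s k) \<longleftrightarrow> (\<forall>k. 0 \<le> s (min k n))" if "s 0 = (0::real)" for s
  proof
    assume H: "\<forall>k\<in>{1..n}. 0 \<le> s k"
    show "\<forall>k. 0 \<le> s (min k n)"
    proof
      fix k show "0 \<le> s (min k n)"
        using H that by (cases "min k n = 0") auto
    qed
  next
    assume "\<forall>k. 0 \<le> s (min k n)"
    then show "\<forall>k\<in>{1..n}. 0 \<le> s k" by (metis atLeastAtMost_iff min.absorb1)
  qed
  have "indep_var borel ((\<lambda>f. f (Suc n)) \<circ> (\<lambda>\<omega>. restrict (\<lambda>i. Z i \<omega>) {Suc n}))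
                  borel (indicator Xa \<circ> (\<lambda>\<omega>. restrict (\<lambda>i. Z i \<omega>) {1..n}))"
    using Xa by (intro indep_var_compose[OF ind] borel_measurable_indicator) auto
  also have "((\<lambda>f. f (Suc n)) \<circ> (\<lambda>\<omega>. restrict (\<lambda>i. Z i \<omega>) {Suc n})) = Z (Suc n)" by auto
  finally have ind2: "indep_var borel (Z (Suc n)) borel (\<lambda>\<omega>. indicator Xa (restrict (\<lambda>i. Z i \<omega>) {1..n}) :: real)"
    by (simp only: comp_def)
  have hm: "(\<lambda>\<omega>. indicator Xa (restrict (\<lambda>i. Z i \<omega>) {1..n}) :: real) \<in> borel_measurable M"
  proof -
    have "(\<lambda>\<omega>. restrict (\<lambda>i. Z i \<omega>) {1..n}) \<in> measurable M (PiM {1..n} (\<lambda>_. borel))"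
      by (intro measurable_restrict Z_meas) auto
    then show ?thesis using Xa by measurable
  qed
  have eq: "indicator (Aset n) \<omega> = (indicator Xa (restrict (\<lambda>i. Z i \<omega>) {1..n}) :: real)" if "\<omega> \<in> space M" for \<omega>
  proof -
    have "(\<forall>k\<in>{1..n}. 0 \<le> (\<Sum>j=1..k. Z j \<omega>)) \<longleftrightarrow> (\<forall>k. 0 \<le> (\<Sum>j=1..min k n. Z j \<omega>))"
      by (rule minI[of "\<lambda>k. \<Sum>j=1..k. Z j \<omega>"]) simp
    moreover have "(\<Sum>j=1..min k n. restrict (\<lambda>i. Z i \<omega>) {1..n} j) = (\<Sum>j=1..min k n. Z j \<omega>)" for k
      by (intro sum.cong) auto
    ultimately show ?thesis
      using that by (auto simp: indicator_def Aset_def Xa_def space_PiM PiE_iff)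
  qed
  have "(\<integral>\<omega>. Z (Suc n) \<omega> * indicator (Aset n) \<omega> \<partial>M) = (\<integral>\<omega>. Z (Suc n) \<omega> * indicator Xa (restrict (\<lambda>i. Z i \<omega>) {1..n}) \<partial>M)"
    using eq by (intro Bochner_Integration.integral_cong) auto
  also have "\<dots> = expectation (Z (Suc n)) * expectation (\<lambda>\<omega>. indicator Xa (restrict (\<lambda>i. Z i \<omega>) {1..n}))"
    using hm by (intro indep_var_lebesgue_integral ind2 Z_int integrable_const_bound[where B=1]) (auto simp: indicator_def)
  also have "\<dots> = 0" using Z_exp[of "Suc n"] by simp
  finally show ?thesis .
qed

lemma Aset_Suc: "\<omega> \<in> Aset (Suc n) \<longleftrightarrow> \<omega> \<in> Aset n \<and> 0 \<le> (\<Sum>j=1..Suc n. Z j \<omega>)"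
proof -
  have "{1..Suc n} = insert (Suc n) {1..n}" by auto
  then show ?thesis unfolding Aset_def by auto
qed

lemma Y_step: "(\<integral>\<omega>. Y n \<omega> \<partial>M) \<le> (\<integral>\<omega>. Y (Suc n) \<omega> \<partial>M)"
proof -
  have i2: "integrable M (\<lambda>\<omega>. Z (Suc n) \<omega> * indicator (Aset n) \<omega>)"
    by (intro integrable_real_mult_indicator Z_int Aset_meas) simp
  have "(\<integral>\<omega>. Y n \<omega> \<partial>M) = (\<integral>\<omega>. Y n \<omega> \<partial>M) + (\<integral>\<omega>. Z (Suc n) \<omega> * indicator (Aset n) \<omega> \<partial>M)"
    using indep_step[of n] by simp
  also have "\<dots> = (\<integral>\<omega>. Y n \<omega> + Z (Suc n) \<omega> * indicator (Aset n) \<omega> \<partial>M)"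
    using Y_int i2 by simp
  also have "\<dots> \<le> (\<integral>\<omega>. Y (Suc n) \<omega> \<partial>M)"
  proof (intro integral_mono Bochner_Integration.integrable_add Y_int i2)
    fix \<omega> assume w: "\<omega> \<in> space M"
    show "Y n \<omega> + Z (Suc n) \<omega> * indicator (Aset n) \<omega> \<le> Y (Suc n) \<omega>"
    proof (cases "\<omega> \<in> Aset n")
      case True
      then show ?thesis using Aset_Suc[of \<omega> n] by (auto simp: Y_def indicator_def)
    next
      case False
      then show ?thesis using Aset_Suc[of \<omega> n] by (auto simp: Y_def indicator_def)
    qed
  qed
  finally show ?thesis .
qed

lemma Y1: "(\<integral>\<omega>. Y 1 \<omega> \<partial>M) = sqrt (2 / pi) / 2"
proof -
  have absZ: "(\<integral>\<omega>. \<bar>Z 1 \<omega>\<bar> \<partial>M) = sqrt (2 / pi)"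
  proof -
    have "(\<integral>\<omega>. \<bar>Z 1 \<omega>\<bar> \<partial>M) = (\<integral>x. std_normal_density x * \<bar>x\<bar>^(2*0+1) \<partial>lborel)"
      using distributed_integral[OF distZ[of 1], of abs] by simp
    also have "\<dots> = sqrt (2 / pi)" by (subst integral_std_normal_moment_abs_odd) simp
    finally show ?thesis .
  qed
  have "(\<integral>\<omega>. Y 1 \<omega> \<partial>M) = (\<integral>\<omega>. (\<bar>Z 1 \<omega>\<bar> + Z 1 \<omega>) / 2 \<partial>M)"
    by (intro Bochner_Integration.integral_cong) (auto simp: Y_def Aset_def indicator_def)
  also have "\<dots> = ((\<integral>\<omega>. \<bar>Z 1 \<omega>\<bar> \<partial>M) + (\<integral>\<omega>. Z 1 \<omega> \<partial>M)) / 2"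
    using Z_int[of 1] by simp
  also have "\<dots> = sqrt (2 / pi) / 2" using absZ Z_exp[of 1] by simp
  finally show ?thesis .
qed

lemma Y_ge: "n \<ge> 1 \<Longrightarrow> sqrt (2 / pi) / 2 \<le> (\<integral>\<omega>. Y n \<omega> \<partial>M)"
proof (induction n rule: dec_induct)
  case base then show ?case using Y1 by simp
next
  case (step n) then show ?case using Y_step[of n] by simp
qed

lemma PA_bound:
  assumes n: "n \<ge> 1"
  shows "(sqrt (2 / pi) / 2)^2 / real n \<le> prob (Aset n)"
proof -
  define c where "c = sqrt (2 / pi) / 2"
  have c: "c > 0" by (simp add: c_def)
  define t where "t = real n / c"
  have t: "t > 0" using n c by (simp add: t_def)
  have "c \<le> (\<integral>\<omega>. Y n \<omega> \<partial>M)" using Y_ge[OF n] by (simp add: c_def)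
  also have "\<dots> \<le> (\<integral>\<omega>. (\<Sum>j=1..n. Z j \<omega>)^2 / (2*t) + t / 2 * indicator (Aset n) \<omega> \<partial>M)"
  proof (intro integral_mono Y_int Bochner_Integration.integrable_add integrable_divide S_sq(1)[OF n]
      integrable_mult_right integrable_real_indicator Aset_meas)
    fix \<omega> assume "\<omega> \<in> space M"
    define s where "s = (\<Sum>j=1..n. Z j \<omega>)"
    have "s \<le> s^2 / (2*t) + t/2"
    proof -
      have "0 \<le> (s - t)^2" by simp
      then have "2 * t * s \<le> s^2 + t^2" by (simp add: power2_eq_square algebra_simps)
      then show ?thesis using t by (simp add: field_simps power2_eq_square)
    qed
    moreover have "0 \<le> s^2 / (2*t)" using t by simp
    ultimately show "Y n \<omega> \<le> (\<Sum>j=1..n. Z j \<omega>)^2 / (2*t) + t / 2 * indicator (Aset n) \<omega>"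
      by (auto simp: Y_def s_def indicator_def)
  qed (simp_all add: emeasure_eq_measure)
  also have "\<dots> = (\<integral>\<omega>. (\<Sum>j=1..n. Z j \<omega>)^2 / (2*t) \<partial>M) + (\<integral>\<omega>. t / 2 * indicator (Aset n) \<omega> \<partial>M)"
    by (intro Bochner_Integration.integral_add integrable_divide S_sq(1)[OF n]
      integrable_mult_right integrable_real_indicator Aset_meas) (simp add: emeasure_eq_measure)
  also have "\<dots> = real n / (2*t) + t / 2 * prob (Aset n)"
    using S_sq(2)[OF n] by simp
  finally have "c \<le> real n / (2*t) + t / 2 * prob (Aset n)" .
  then have "c \<le> c / 2 + real n / c / 2 * prob (Aset n)" using n c by (simp add: t_def)
  then have "c^2 \<le> real n * prob (Aset n)" using c by (simp add: field_simps power2_eq_square)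
  then show ?thesis using n by (simp add: c_def field_simps)
qed

lemma sum_Aset_le: "n0 \<ge> 1 \<Longrightarrow> (\<Sum>n\<in>{1..K}. (indicator (Aset n) \<omega> :: ennreal)) \<le> Ntilde Z 0 n0 \<omega>"
proof (cases "\<exists>n\<ge>n0. Zbar Z n \<omega> < 0")
  case False then show ?thesis unfolding Ntilde_def if_not_P[OF False] by simp
next
  case True
  assume n0: "n0 \<ge> 1"
  define m where "m = (LEAST n. n \<ge> n0 \<and> Zbar Z n \<omega> < 0)"
  have m: "m \<ge> n0" "Zbar Z m \<omega> < 0" using LeastI_ex[OF True] by (auto simp: m_def)
  have m1: "m \<ge> 1" using m n0 by simp
  have Sm: "(\<Sum>j=1..m. Z j \<omega>) < 0" using m Zbar_less[OF m1, where Z=Z and \<omega>=\<omega> and x=0] by simp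
  have "(indicator (Aset n) \<omega> :: ennreal) \<le> indicator {..<m} n" for n
  proof (cases "n < m")
    case False
    then have "\<omega> \<notin> Aset n" using Sm m1 by (auto simp: Aset_def not_less intro!: bexI[of _ m])
    then show ?thesis by simp
  qed (simp add: indicator_def)
  then have "(\<Sum>n\<in>{1..K}. (indicator (Aset n) \<omega> :: ennreal)) \<le> (\<Sum>n\<in>{1..K}. indicator {..<m} n)"
    by (intro sum_mono)
  also have "\<dots> = of_nat (card ({1..K} \<inter> {..<m}))" by (simp add: indicator_def sum.If_cases Int_def)
  also have "\<dots> \<le> of_nat m"
  proof -
    have "card ({1..K} \<inter> {..<m}) \<le> card {..<m}" by (intro card_mono) auto
    then show ?thesis by simp
  qed
  also have "\<dots> = Ntilde Z 0 n0 \<omega>" using True by (simp add: Ntilde_def m_def ennreal_of_nat_eq_real_of_nat)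
  finally show ?thesis .
qed

lemma part3_int:
  assumes n0: "n0 \<ge> 1"
  shows "(\<integral>\<^sup>+ \<omega>. Ntilde Z 0 n0 \<omega> \<partial>M) = \<infinity>"
proof (rule ennreal_infI)
  fix K' :: nat
  define c2 where "c2 = (sqrt (2 / pi) / 2)^2"
  have c2: "c2 > 0" by (simp add: c2_def)
  define K where "K = nat \<lceil>exp (real K' / c2)\<rceil>"
  have "real K \<ge> exp (real K' / c2)" unfolding K_def by linarith
  then have "ln (real K + 1) \<ge> real K' / c2"
    by (metis exp_gt_zero add_increasing2 less_add_one ln_exp ln_le_cancel_iff order.strict_trans1 of_nat_0_le_iff order.trans less_imp_le)
  then have "real K' \<le> c2 * ln (real K + 1)" using c2 by (simp add: field_simps)
  also have "c2 * ln (real K + 1) \<le> c2 * harm K" using ln_le_harm[of K] c2 by (intro mult_left_mono) auto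
  finally have "real K' \<le> c2 * harm K" .
  then have "(of_nat K' :: ennreal) \<le> ennreal (c2 * harm K)"
    by (simp add: ennreal_of_nat_eq_real_of_nat ennreal_leI)
  also have "ennreal (c2 * harm K) = (\<Sum>n\<in>{1..K}. ennreal (c2 / real n))"
    by (simp add: harm_def sum_distrib_left divide_inverse sum_ennreal c2 less_imp_le)
  also have "\<dots> \<le> (\<Sum>n\<in>{1..K}. emeasure M (Aset n))"
    using PA_bound by (intro sum_mono) (auto simp: emeasure_eq_measure c2_def intro!: ennreal_leI)
  also have "\<dots> = (\<integral>\<^sup>+ \<omega>. (\<Sum>n\<in>{1..K}. indicator (Aset n) \<omega>) \<partial>M)"
    by (subst nn_integral_sum) auto
  also have "\<dots> \<le> (\<integral>\<^sup>+ \<omega>. Ntilde Z 0 n0 \<omega> \<partial>M)"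
    by (intro nn_integral_mono sum_Aset_le n0)
  finally show "of_nat K' \<le> (\<integral>\<^sup>+ \<omega>. Ntilde Z 0 n0 \<omega> \<partial>M)" .
qed

definition "G j = sigma_sets (space M) {Z (Suc j) -` B \<inter> space M | B. B \<in> sets borel}"

lemma G_sa: "sigma_algebra (space M) (G j)"
  unfolding G_def by (intro sigma_algebra_sigma_sets) auto

lemma G_indep: "indep_sets G UNIV"
proof -
  define H where "H i = sigma_sets (space M) {Z i -` A \<inter> space M | A. A \<in> sets borel}" for i
  have indH: "indep_sets H {1..}" using indZ unfolding indep_vars_def H_def by simp
  have GH: "G j = H (Suc j)" for j by (simp add: G_def H_def)
  show ?thesis unfolding indep_sets_def
  proof (intro conjI ballI allI impI)
    fix i show "G i \<subseteq> events" using indH unfolding indep_sets_def GH by auto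
  next
    fix J :: "nat set" and A assume J: "J \<subseteq> UNIV" "J \<noteq> {}" "finite J" and A: "A \<in> Pi J G"
    define A' where "A' j = A (j - 1)" for j
    have "prob (\<Inter>j\<in>Suc ` J. A' j) = (\<Prod>j\<in>Suc ` J. prob (A' j))"
      using J A by (intro indep_setsD[OF indH]) (auto simp: A'_def GH)
    moreover have "(\<Inter>j\<in>Suc ` J. A' j) = (\<Inter>j\<in>J. A j)" by (auto simp: A'_def)
    moreover have "(\<Prod>j\<in>Suc ` J. prob (A' j)) = (\<Prod>j\<in>J. prob (A j))"
      by (subst prod.reindex) (auto simp: A'_def)
    ultimately show "prob (\<Inter>j\<in>J. A j) = (\<Prod>j\<in>J. prob (A j))" by simp
  qed
qed

definition "Ev = {\<omega>\<in>space M. \<forall>i m. \<exists>k\<ge>m. (\<Sum>j=1..k. Z j \<omega>) / sqrt (real k) < -1 + 1 / real (Suc i)}"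

lemma Ev_tail: "Ev \<in> tail_events G"
  unfolding tail_events_def
proof (intro InterI, safe)
  fix n
  define N where "N = sigma (space M) (\<Union> (G ` {n..}))"
  have "G j \<subseteq> Pow (space M)" for j
    unfolding G_def by (intro subsetI PowI sigma_sets_into_sp[of _ "space M"]) auto
  then have sub: "\<Union> (G ` {n..}) \<subseteq> Pow (space M)" by blast
  have sN: "sets N = sigma_sets (space M) (\<Union> (G ` {n..}))" unfolding N_def using sub by (rule sets_measure_of)
  have spN: "space N = space M" unfolding N_def using sub by (rule space_measure_of)
  have Zm: "Z j \<in> measurable N borel" if "j > n" for j
  proof -
    have "Z j -` B \<inter> space M \<in> sets N" if "B \<in> sets borel" for B
    proof -
      have "Z (Suc (j - 1)) -` B \<inter> space M \<in> G (j - 1)"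
        unfolding G_def using that by (intro sigma_sets.Basic) auto
      then have "Z j -` B \<inter> space M \<in> G (j - 1)" using \<open>j > n\<close> by simp
      then show ?thesis unfolding sN using \<open>j > n\<close> by (intro sigma_sets.Basic) auto
    qed
    then show ?thesis unfolding measurable_def spN by auto
  qed
  have [measurable]: "(\<lambda>\<omega>. \<Sum>j\<in>{n<..k}. Z j \<omega>) \<in> borel_measurable N" for k
    by (intro borel_measurable_sum Zm) auto
  define E' where "E' = {\<omega>\<in>space N. \<forall>i m. \<exists>k\<ge>m. (\<Sum>j\<in>{n<..k}. Z j \<omega>) / sqrt (real k) < -1 + 1 / real (Suc i)}"
  have E'm: "E' \<in> sets N" unfolding E'_def by measurable
  have "Ev = E'"
  proof -
    have "(\<forall>i m. \<exists>k\<ge>m. (\<Sum>j=1..k. Z j \<omega>) / sqrt (real k) < -1 + 1 / real (Suc i)) \<longleftrightarrow>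
          (\<forall>i m. \<exists>k\<ge>m. (\<Sum>j\<in>{n<..k}. Z j \<omega>) / sqrt (real k) < -1 + 1 / real (Suc i))" for \<omega>
    proof (rule io_shift)
      have ev: "\<forall>\<^sub>F k in sequentially. (\<Sum>j=1..n. Z j \<omega>) / sqrt (real k) =
          (\<Sum>j=1..k. Z j \<omega>) / sqrt (real k) - (\<Sum>j\<in>{n<..k}. Z j \<omega>) / sqrt (real k)"
        using eventually_ge_at_top[of n]
      proof eventually_elim
        case (elim k)
        have sp: "{1..k} = {1..n} \<union> {n<..k}" using elim by auto
        have "(\<Sum>j=1..k. Z j \<omega>) = (\<Sum>j=1..n. Z j \<omega>) + (\<Sum>j\<in>{n<..k}. Z j \<omega>)"
          unfolding sp by (rule sum.union_disjoint) auto
        then show ?case by (simp add: add_divide_distrib)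
      qed
      have "filterlim (\<lambda>k. sqrt (real k)) at_top sequentially"
        by (rule filterlim_compose[OF sqrt_at_top filterlim_real_sequentially])
      then have "(\<lambda>k. (\<Sum>j=1..n. Z j \<omega>) / sqrt (real k)) \<longlonglongrightarrow> 0"
        by (intro tendsto_divide_0[OF tendsto_const] filterlim_at_top_imp_at_infinity)
      then show "(\<lambda>k. (\<Sum>j=1..k. Z j \<omega>) / sqrt (real k) - (\<Sum>j\<in>{n<..k}. Z j \<omega>) / sqrt (real k)) \<longlonglongrightarrow> 0"
        using ev by (rule Lim_transform_eventually)
    qed
    then show ?thesis unfolding Ev_def E'_def spN by blast
  qed
  then show "Ev \<in> sigma_sets (space M) (\<Union> (G ` {n..}))" using E'm sN by simp
qed

lemma Ev_prob: "prob Ev = 1"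
proof -
  define p where "p = prob {\<omega>\<in>space M. Z 1 \<omega> < -1}"
  have p: "p > 0" unfolding p_def by (intro std_prob_pos distZ) simp
  define D where "D k = {\<omega>\<in>space M. (\<Sum>j=1..k. Z j \<omega>) / sqrt (real k) < -1}" for k
  have Dm: "D k \<in> sets M" for k unfolding D_def by measurable
  have PD: "prob (D k) = p" if "k \<ge> 1" for k
  proof -
    have "prob (D k) = prob {\<omega>\<in>space M. (\<Sum>j\<in>{1..k}. Z j \<omega>) / sqrt (real (card {1..k})) < -1}"
      by (simp add: D_def)
    also have "\<dots> = p" unfolding p_def using that by (intro std_prob_eq sum_std distZ) auto
    finally show ?thesis .
  qed
  define U where "U m = (\<Union>k\<in>{Suc m..}. D k)" for m
  have Um: "U m \<in> sets M" for m unfolding U_def using Dm by auto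
  have "decseq U" unfolding U_def decseq_def by (intro allI impI UN_mono) auto
  then have lim: "(\<lambda>m. prob (U m)) \<longlonglongrightarrow> prob (\<Inter>m. U m)"
    using Um by (intro finite_Lim_measure_decseq) auto
  have "p \<le> prob (U m)" for m
  proof -
    have "prob (D (Suc m)) \<le> prob (U m)" using Um by (intro finite_measure_mono) (auto simp: U_def)
    then show ?thesis using PD[of "Suc m"] by simp
  qed
  then have pU: "p \<le> prob (\<Inter>m. U m)" by (intro LIMSEQ_le_const[OF lim]) auto
  have "(\<Inter>m. U m) \<subseteq> Ev"
  proof
    fix \<omega> assume w: "\<omega> \<in> (\<Inter>m. U m)"
    then have ws: "\<omega> \<in> space M" by (auto simp: U_def D_def)
    have "\<exists>k\<ge>m. (\<Sum>j=1..k. Z j \<omega>) / sqrt (real k) < -1 + 1 / real (Suc i)" for i m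
    proof -
      from w have "\<omega> \<in> U m" by auto
      then obtain k where "k \<ge> Suc m" "(\<Sum>j=1..k. Z j \<omega>) / sqrt (real k) < -1" by (auto simp: U_def D_def)
      moreover have "(0::real) < 1 / real (Suc i)" by simp
      ultimately have "k \<ge> m" "(\<Sum>j=1..k. Z j \<omega>) / sqrt (real k) < -1 + 1 / real (Suc i)" by linarith+
      then show ?thesis by blast
    qed
    then show "\<omega> \<in> Ev" using ws by (auto simp: Ev_def)
  qed
  moreover have Evm: "Ev \<in> sets M" unfolding Ev_def by measurable
  ultimately have "prob (\<Inter>m. U m) \<le> prob Ev" by (intro finite_measure_mono)
  then have "prob Ev > 0" using pU p by simp
  moreover have "prob Ev = 0 \<or> prob Ev = 1"
    by (rule kolmogorov_0_1_law[OF G_sa G_indep Ev_tail])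
  ultimately show ?thesis by simp
qed

lemma part3_prob:
  assumes n0: "n0 \<ge> 1"
  shows "prob {\<omega> \<in> space M. Ntilde Z 0 n0 \<omega> < \<infinity>} = 1"
proof -
  define F where "F = {\<omega>\<in>space M. \<exists>n\<ge>n0. Zbar Z n \<omega> < 0}"
  have Fm: "F \<in> sets M" unfolding F_def using F_meas[OF n0] .
  have "Ev \<subseteq> F"
  proof
    fix \<omega> assume "\<omega> \<in> Ev"
    then obtain k where k: "k \<ge> n0" "(\<Sum>j=1..k. Z j \<omega>) / sqrt (real k) < -1 + 1 / real (Suc 0)" and w: "\<omega> \<in> space M"
      unfolding Ev_def by blast
    have k1: "k \<ge> 1" using k n0 by simp
    then have "(\<Sum>j=1..k. Z j \<omega>) < 0" using k by (simp add: divide_less_0_iff)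
    then have "Zbar Z k \<omega> < 0" using Zbar_less[OF k1, where Z=Z and \<omega>=\<omega> and x=0] by simp
    then show "\<omega> \<in> F" using k w by (auto simp: F_def)
  qed
  then have "prob Ev \<le> prob F" using Fm by (intro finite_measure_mono)
  then have "prob F = 1" using Ev_prob prob_le_1[of F] by simp
  then show ?thesis unfolding F_def by (subst Ntilde_fin)
qed
end

theorem lemma4:
  fixes M :: "'a measure" and Z :: "nat \<Rightarrow> 'a \<Rightarrow> real" and n0 :: nat
  assumes "prob_space M"
    and "prob_space.indep_vars M (\<lambda>_. borel) Z {1..}"
    and "\<And>j. j \<ge> 1 \<Longrightarrow> distributed M lborel (Z j) std_normal_density"
    and "n0 \<ge> 1"
  shows "(\<forall>x>0. measure M {\<omega> \<in> space M. Ntilde Z x n0 \<omega> < \<infinity>} = 1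
                \<and> (\<integral>\<^sup>+ \<omega>. Ntilde Z x n0 \<omega> \<partial>M) < \<infinity>)
       \<and> (\<forall>x<0. 0 < measure M {\<omega> \<in> space M. Ntilde Z x n0 \<omega> < \<infinity>}
                \<and> measure M {\<omega> \<in> space M. Ntilde Z x n0 \<omega> < \<infinity>} < 1
                \<and> (\<integral>\<^sup>+ \<omega>. Ntilde Z x n0 \<omega> \<partial>M) = \<infinity>)
       \<and> (measure M {\<omega> \<in> space M. Ntilde Z 0 n0 \<omega> < \<infinity>} = 1
                \<and> (\<integral>\<^sup>+ \<omega>. Ntilde Z 0 n0 \<omega> \<partial>M) = \<infinity>)"
proof -
  interpret L: lem4 M Z
    using assms(1,2,3) by (simp add: lem4_def lem4_axioms_def)
  show ?thesis
    using L.part1[OF _ assms(4)] L.part2[OF _ assms(4)] L.part3_prob[OF assms(4)] L.part3_int[OF assms(4)]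
    by blast
qed

end
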